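(* Let $\mathbf{P_0},\mathbf{P_1}$ be $n\times n$ transition probability matrices of irreducible and aperiodic Markov chains on $n$ states, let $\mathbf{P_t}=(1-t)\mathbf{P_0}+t\mathbf{P_1}$ for $t\in[0,1]$, and let $\pi_t$ be the stationary distribution of $\mathbf{P_t}$. Let $\delta\in(0,1]$ and $\epsilon>0$. Then for every integer $T\ge \frac{2\,t_{mix}^2(\epsilon/2)}{\epsilon\delta}$ and every integer $k$ with $\delta\le k/T\le 1$, $$\|\pi_0\mathbf{P_{1/T}}\mathbf{P_{2/T}}\cdots\mathbf{P_{k/T}}-\pi_{k/T}\|_{TV}\le\epsilon.$$
   Context: Distributions are row vectors; $\|\mu-\nu\|_{TV}=\frac12\|\mu-\nu\|_1$. For an irreducible aperiodic transition matrix $\mathbf{P}$ with stationary distribution $\pi$, $t_{mix}(\mathbf{P},\epsilon)=\inf\{T\in\mathbb{N}: \|\nu\mathbf{P}^T-\pi\|_{TV}\le\epsilon \text{ for all distributions }\nu\}$, and $t_{mix}(\epsilon)=\sup_{s\in[0,1]}t_{mix}(\mathbf{P_s},\epsilon)$. *)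

theory Defs
  imports "HOL-Analysis.Analysis"
begin

text \<open>Transition matrices on a finite state space 'n are elements of real^'n^'n,
  row i being the distribution of the next state from state i.
  Distributions are row vectors real^'n; the row vector mu times P is  mu v* P.\<close>

definition is_distribution :: "real^'n::finite \<Rightarrow> bool" where
  "is_distribution \<mu> \<longleftrightarrow> (\<forall>i. \<mu> $ i \<ge> 0) \<and> (\<Sum>i\<in>UNIV. \<mu> $ i) = 1"

definition stochastic :: "real^'n::finite^'n \<Rightarrow> bool" where
  "stochastic P \<longleftrightarrow> (\<forall>i. is_distribution (P $ i))"

fun mpow :: "real^'n::finite^'n \<Rightarrow> nat \<Rightarrow> real^'n^'n" where
  "mpow P 0 = mat 1"
| "mpow P (Suc m) = mpow P m ** P"

definition irreducible_chain :: "real^'n::finite^'n \<Rightarrow> bool" where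
  "irreducible_chain P \<longleftrightarrow> (\<forall>i j. \<exists>m. mpow P m $ i $ j > 0)"

definition aperiodic_chain :: "real^'n::finite^'n \<Rightarrow> bool" where
  "aperiodic_chain P \<longleftrightarrow> (\<forall>i. Gcd {m. m > 0 \<and> mpow P m $ i $ i > 0} = 1)"

definition tv_dist :: "real^'n::finite \<Rightarrow> real^'n \<Rightarrow> real" where
  "tv_dist \<mu> \<nu> = (1/2) * (\<Sum>i\<in>UNIV. \<bar>\<mu> $ i - \<nu> $ i\<bar>)"

definition is_stationary :: "real^'n::finite^'n \<Rightarrow> real^'n \<Rightarrow> bool" where
  "is_stationary P \<pi> \<longleftrightarrow> is_distribution \<pi> \<and> \<pi> v* P = \<pi>"

text \<open>The (unique, for irreducible P) stationary distribution.\<close>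
definition stat_dist :: "real^'n::finite^'n \<Rightarrow> real^'n" where
  "stat_dist P = (THE \<pi>. is_stationary P \<pi>)"

definition tmix :: "real^'n::finite^'n \<Rightarrow> real \<Rightarrow> nat" where
  "tmix P \<epsilon> = (LEAST T. \<forall>\<nu>. is_distribution \<nu> \<longrightarrow>
       tv_dist (\<nu> v* mpow P T) (stat_dist P) \<le> \<epsilon>)"

definition interp :: "real^'n::finite^'n \<Rightarrow> real^'n^'n \<Rightarrow> real \<Rightarrow> real^'n^'n" where
  "interp P0 P1 t = (1 - t) *\<^sub>R P0 + t *\<^sub>R P1"

text \<open>t_mix(eps) = sup over s in [0,1] of t_mix(P_s, eps), valued in the extended reals
  (so that an unbounded supremum is +infinity rather than an arbitrary value).\<close>
definition tmix_unif :: "real^'n::finite^'n \<Rightarrow> real^'n^'n \<Rightarrow> real \<Rightarrow> ereal" where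
  "tmix_unif P0 P1 \<epsilon> = (SUP s\<in>{0..1}. ereal (real (tmix (interp P0 P1 s) \<epsilon>)))"

fun inhom_prod :: "(nat \<Rightarrow> real^'n::finite^'n) \<Rightarrow> nat \<Rightarrow> real^'n^'n" where
  "inhom_prod Q 0 = mat 1"
| "inhom_prod Q (Suc k) = inhom_prod Q k ** Q (Suc k)"

end

theory Submission
  imports Defs
begin


lemma vm_nth: "(x v* A) $ j = (\<Sum>i\<in>UNIV. x$i * A$i$j)"
  by (simp add: vector_matrix_mult_def)
lemma mm_nth: "(A ** B) $ i $ j = (\<Sum>k\<in>UNIV. A$i$k * B$k$j)"
  by (simp add: matrix_matrix_mult_def)
lemma mm_row: "(A ** B) $ i = (A $ i) v* B"
  by (simp add: vec_eq_iff mm_nth vm_nth)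

lemma dist_vm:
  assumes x: "is_distribution x" and P: "stochastic P"
  shows "is_distribution (x v* P)"
proof -
  have nn: "\<And>i j. P$i$j \<ge> 0" and s1: "\<And>i. (\<Sum>j\<in>UNIV. P$i$j) = 1"
    using P by (auto simp: stochastic_def is_distribution_def)
  have "(\<Sum>j\<in>UNIV. (x v* P)$j) = (\<Sum>j\<in>UNIV. \<Sum>i\<in>UNIV. x$i * P$i$j)"
    by (simp add: vm_nth)
  also have "\<dots> = (\<Sum>i\<in>UNIV. \<Sum>j\<in>UNIV. x$i * P$i$j)" by (rule sum.swap)
  also have "\<dots> = (\<Sum>i\<in>UNIV. x$i * (\<Sum>j\<in>UNIV. P$i$j))"
    by (simp add: sum_distrib_left)
  also have "\<dots> = 1" using x s1 by (simp add: is_distribution_def)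
  finally show ?thesis using x nn
    by (auto simp: is_distribution_def vm_nth intro!: sum_nonneg)
qed

lemma stoch_mult: "stochastic A \<Longrightarrow> stochastic B \<Longrightarrow> stochastic (A ** B)"
  by (simp add: stochastic_def mm_row dist_vm)

lemma stoch_id: "stochastic (mat 1 :: real^'n::finite^'n)"
  by (simp add: stochastic_def is_distribution_def mat_def)

lemma mpow_stoch: "stochastic P \<Longrightarrow> stochastic (mpow P m)"
  by (induct m) (auto simp: stoch_id stoch_mult)

lemma mpow_add: "mpow P (a + b) = mpow P a ** mpow P b"
  by (induct b) (auto simp: matrix_mul_assoc)

lemma stoch_nn: "stochastic P \<Longrightarrow> P$i$j \<ge> 0"
  by (simp add: stochastic_def is_distribution_def)

lemma stoch_sum: "stochastic P \<Longrightarrow> (\<Sum>j\<in>UNIV. P$i$j) = 1"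
  by (simp add: stochastic_def is_distribution_def)

lemma mm_ge: assumes "\<And>i j. A$i$j \<ge> 0" "\<And>i j. B$i$j \<ge> (0::real)"
  shows "(A ** B)$i$j \<ge> A$i$k * B$k$j"
  unfolding mm_nth by (rule member_le_sum) (auto simp: assms)

lemma tv_sym: "tv_dist x y = tv_dist y x"
  by (simp add: tv_dist_def abs_minus_commute)

lemma tv_nonneg: "tv_dist x y \<ge> 0"
  by (simp add: tv_dist_def sum_nonneg)

lemma tv_tri: "tv_dist x z \<le> tv_dist x y + tv_dist y z"
proof -
  have "(\<Sum>i\<in>UNIV. \<bar>x$i - z$i\<bar>) \<le> (\<Sum>i\<in>UNIV. \<bar>x$i - y$i\<bar> + \<bar>y$i - z$i\<bar>)"
    by (rule sum_mono) auto
  then show ?thesis by (simp add: tv_dist_def sum.distrib)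
qed

lemma tv_le1: assumes "is_distribution x" "is_distribution y" shows "tv_dist x y \<le> 1"
proof -
  have "(\<Sum>i\<in>UNIV. \<bar>x$i - y$i\<bar>) \<le> (\<Sum>i\<in>UNIV. x$i + y$i)"
  proof (intro sum_mono)
    fix i have "x$i \<ge> 0" "y$i \<ge> 0" using assms by (auto simp: is_distribution_def)
    then show "\<bar>x$i - y$i\<bar> \<le> x$i + y$i" by (simp add: abs_if)
  qed
  then show ?thesis using assms by (simp add: tv_dist_def sum.distrib is_distribution_def)
qed

lemma tv_zero: "tv_dist x y = 0 \<Longrightarrow> x = y"
  by (simp add: tv_dist_def sum_nonneg_eq_0_iff vec_eq_iff)

lemma l1_nonexp: assumes "stochastic Q"
  shows "(\<Sum>j\<in>UNIV. \<bar>(d v* Q)$j\<bar>) \<le> (\<Sum>i\<in>UNIV. \<bar>d$i\<bar>)"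
proof -
  have "(\<Sum>j\<in>UNIV. \<bar>(d v* Q)$j\<bar>) \<le> (\<Sum>j\<in>UNIV. \<Sum>i\<in>UNIV. \<bar>d$i\<bar> * Q$i$j)"
    unfolding vm_nth
    by (intro sum_mono order.trans[OF sum_abs]) (auto simp: abs_mult stoch_nn[OF assms])
  also have "\<dots> = (\<Sum>i\<in>UNIV. \<Sum>j\<in>UNIV. \<bar>d$i\<bar> * Q$i$j)" by (rule sum.swap)
  also have "\<dots> = (\<Sum>i\<in>UNIV. \<bar>d$i\<bar> * (\<Sum>j\<in>UNIV. Q$i$j))"
    by (simp add: sum_distrib_left)
  finally show ?thesis by (simp add: stoch_sum[OF assms])
qed

lemma l1_contract: assumes "stochastic Q" "\<And>i j. Q$i$j \<ge> c" "(\<Sum>i\<in>UNIV. d$i) = 0"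
  shows "(\<Sum>j\<in>UNIV. \<bar>(d v* Q)$j\<bar>) \<le> (1 - real CARD('n) * c) * (\<Sum>i\<in>UNIV. \<bar>(d::real^'n::finite)$i\<bar>)"
proof -
  have eq: "(d v* Q)$j = (\<Sum>i\<in>UNIV. d$i * (Q$i$j - c))" for j
  proof -
    have "(\<Sum>i\<in>UNIV. d$i * (Q$i$j - c)) = (\<Sum>i\<in>UNIV. d$i * Q$i$j) - c * (\<Sum>i\<in>UNIV. d$i)"
      by (simp add: algebra_simps sum_subtractf sum_distrib_left)
    then show ?thesis using assms(3) by (simp add: vm_nth)
  qed
  have "(\<Sum>j\<in>UNIV. \<bar>(d v* Q)$j\<bar>) \<le> (\<Sum>j\<in>UNIV. \<Sum>i\<in>UNIV. \<bar>d$i\<bar> * (Q$i$j - c))"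
    unfolding eq
    by (intro sum_mono order.trans[OF sum_abs]) (auto simp: abs_mult assms(2))
  also have "\<dots> = (\<Sum>i\<in>UNIV. \<Sum>j\<in>UNIV. \<bar>d$i\<bar> * (Q$i$j - c))" by (rule sum.swap)
  also have "\<dots> = (\<Sum>i\<in>UNIV. \<bar>d$i\<bar> * (\<Sum>j\<in>UNIV. Q$i$j - c))"
    by (simp add: sum_distrib_left)
  also have "\<dots> = (\<Sum>i\<in>UNIV. \<bar>d$i\<bar> * (1 - real CARD('n) * c))"
    by (simp add: sum_subtractf stoch_sum[OF assms(1)])
  also have "\<dots> = (1 - real CARD('n) * c) * (\<Sum>i\<in>UNIV. \<bar>d$i\<bar>)"
    by (simp add: sum_distrib_left mult.commute)
  finally show ?thesis .
qed

lemma tv_nonexp: "stochastic Q \<Longrightarrow> tv_dist (x v* Q) (y v* Q) \<le> tv_dist x y"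
  using l1_nonexp[of Q "x - y"]
  by (simp add: tv_dist_def vector_matrix_mult_diff_distrib)

lemma tv_contract: assumes "stochastic Q" "\<And>i j. Q$i$j \<ge> c"
  "is_distribution x" "is_distribution y"
  shows "tv_dist (x v* Q) (y v* Q) \<le> (1 - real CARD('n) * c) * tv_dist x (y::real^'n::finite)"
proof -
  have "(\<Sum>i\<in>UNIV. (x-y)$i) = 0" using assms(3,4) by (simp add: is_distribution_def sum_subtractf)
  from l1_contract[OF assms(1,2) this] show ?thesis
    by (simp add: tv_dist_def vector_matrix_mult_diff_distrib)
qed

lemma tv_perturb: assumes x: "is_distribution x" and "\<And>i. tv_dist (A$i) (B$i) \<le> e"
  shows "tv_dist (x v* A) (x v* B) \<le> e"
proof -
  have "(\<Sum>j\<in>UNIV. \<bar>(x v* A)$j - (x v* B)$j\<bar>) \<le> (\<Sum>j\<in>UNIV. \<Sum>i\<in>UNIV. x$i * \<bar>A$i$j - B$i$j\<bar>)"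
    unfolding vm_nth sum_subtractf[symmetric] right_diff_distrib[symmetric]
    using x by (intro sum_mono order.trans[OF sum_abs]) (auto simp: abs_mult is_distribution_def)
  also have "\<dots> = (\<Sum>i\<in>UNIV. \<Sum>j\<in>UNIV. x$i * \<bar>A$i$j - B$i$j\<bar>)" by (rule sum.swap)
  also have "\<dots> = (\<Sum>i\<in>UNIV. x$i * (\<Sum>j\<in>UNIV. \<bar>A$i$j - B$i$j\<bar>))"
    by (simp add: sum_distrib_left)
  also have "\<dots> \<le> (\<Sum>i\<in>UNIV. x$i * (e*2))"
    using x assms(2) by (intro sum_mono mult_left_mono) (auto simp: is_distribution_def tv_dist_def)
  also have "\<dots> = e*2" using x by (simp add: is_distribution_def sum_distrib_right[symmetric])
  finally show ?thesis by (simp add: tv_dist_def)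
qed


lemma semigroup_large:
  fixes S :: "nat set"
  assumes add: "\<And>a b. a \<in> S \<Longrightarrow> b \<in> S \<Longrightarrow> a + b \<in> S"
    and pos: "\<And>a. a \<in> S \<Longrightarrow> a > 0" and g: "Gcd S = 1"
  shows "\<exists>N. \<forall>n\<ge>N. n \<in> S"
proof -
  have mult: "Suc k * b \<in> S" if "b \<in> S" for k b
    using that by (induct k) (auto simp: add)
  have mult': "k * b \<in> S" if "b \<in> S" "k > 0" for k b
    using mult[OF that(1)] that(2) gr0_implies_Suc by blast
  have ne: "S \<noteq> {}" using g by auto
  then obtain s where s: "s \<in> S" by auto
  define D where "D = {d. d > 0 \<and> (\<exists>a\<in>S. \<exists>b\<in>S. a = b + d)}"
  have sD: "s \<in> D" using s pos add[OF s s] unfolding D_def by auto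
  define d where "d = (LEAST d. d \<in> D)"
  have dD: "d \<in> D" using LeastI[of "\<lambda>d. d\<in>D", OF sD] d_def by simp
  have dmin: "\<And>r. r \<in> D \<Longrightarrow> d \<le> r" using Least_le d_def by auto
  obtain a b where ab: "a \<in> S" "b \<in> S" "a = b + d" "d > 0" using dD unfolding D_def by auto
  have dvd: "d dvd x" if x: "x \<in> S" for x
  proof (rule ccontr)
    assume nd: "\<not> d dvd x"
    define q where "q = x div d"
    define r where "r = x mod d"
    have xr: "x = q*d + r" by (simp add: q_def r_def)
    have r0: "r > 0" "r < d" using nd ab(4) by (auto simp: r_def dvd_eq_mod_eq_0)
    have h1: "x + Suc q * b \<in> S" using add[OF x mult[OF ab(2)]] .
    have h2: "q*a + b \<in> S"
    proof (cases q)
      case 0 then show ?thesis using ab by simp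
    next
      case (Suc q') then show ?thesis using add[OF mult[OF ab(1)] ab(2)] by simp
    qed
    have h3: "x + Suc q * b = (q*a + b) + r" using xr ab(3) by (simp add: algebra_simps)
    have "r \<in> D" unfolding D_def
      by (rule CollectI, rule conjI[OF r0(1)], rule bexI[OF _ h1], rule bexI[OF _ h2], rule h3)
    with dmin r0 show False by fastforce
  qed
  have "d dvd Gcd S" using dvd by (simp add: Gcd_greatest)
  then have d1: "d = 1" using g by simp
  then have b1: "b + 1 \<in> S" "b \<in> S" "b > 0" using ab pos by auto
  show ?thesis
  proof (intro exI allI impI)
    fix n assume n: "b*b + 1 \<le> n"
    define q where "q = n div b"
    define r where "r = n mod b"
    have nqr: "n = q*b + r" by (simp add: q_def r_def)
    have rb: "r < b" using b1 by (simp add: r_def)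
    have "b*b div b \<le> q" unfolding q_def using n by (intro div_le_mono) simp
    then have bq: "b \<le> q" using b1 by simp
    have eq: "n = (q - r)*b + r*(b+1)" using nqr rb bq
      by (simp add: algebra_simps diff_mult_distrib)
    show "n \<in> S"
    proof (cases "r = 0")
      case True
      then show ?thesis using nqr mult'[OF b1(2), of q] bq b1 by simp
    next
      case False
      show ?thesis
      proof (cases "q = r")
        case True
        then show ?thesis using eq mult'[OF b1(1), of r] False by simp
      next
        case qr: False
        then show ?thesis using eq add[OF mult'[OF b1(2), of "q - r"] mult'[OF b1(1), of r]] False rb bq
          by simp
      qed
    qed
  qed
qed

lemma irr_aper_primitive:
  assumes st: "stochastic P" and irr: "irreducible_chain P" and ap: "aperiodic_chain P"
  shows "\<exists>M. \<forall>i j. mpow P M $ i $ j > 0"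
proof -
  have nn: "\<And>m i j. mpow P m $ i $ j \<ge> 0" using mpow_stoch[OF st] stoch_nn by blast
  have prod: "mpow P (a+b) $ i $ j \<ge> mpow P a $ i $ k * mpow P b $ k $ j" for a b i j k
    unfolding mpow_add by (rule mm_ge[OF nn nn])
  have "\<exists>N. \<forall>n\<ge>N. mpow P n $ i $ i > 0" for i
  proof -
    let ?S = "{m. m > 0 \<and> mpow P m $ i $ i > 0}"
    have "\<exists>N. \<forall>n\<ge>N. n \<in> ?S"
    proof (rule semigroup_large)
      fix a b assume ab: "a \<in> ?S" "b \<in> ?S"
      then have "0 < mpow P a $ i $ i * mpow P b $ i $ i" by simp
      also have "\<dots> \<le> mpow P (a+b) $ i $ i" by (rule prod)
      finally show "a + b \<in> ?S" using ab by simp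
    next
      show "Gcd ?S = 1" using ap by (simp add: aperiodic_chain_def)
    qed auto
    then show ?thesis by auto
  qed
  then obtain N where N: "\<And>i n. n \<ge> N i \<Longrightarrow> mpow P n $ i $ i > 0" by metis
  from irr obtain m where m: "\<And>i j. mpow P (m i j) $ i $ j > 0"
    unfolding irreducible_chain_def by metis
  define M where "M = (\<Sum>i\<in>UNIV. N i) + (\<Sum>i\<in>UNIV. \<Sum>j\<in>UNIV. m i j)"
  have "mpow P M $ i $ j > 0" for i j
  proof -
    have "N i \<le> (\<Sum>i\<in>UNIV. N i)" by (rule member_le_sum) auto
    moreover have "m i j \<le> (\<Sum>j\<in>UNIV. m i j)" by (rule member_le_sum) auto
    moreover have "(\<Sum>j\<in>UNIV. m i j) \<le> (\<Sum>i\<in>UNIV. \<Sum>j\<in>UNIV. m i j)"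
      by (rule member_le_sum) auto
    ultimately have le: "N i \<le> M - m i j" "M - m i j + m i j = M" unfolding M_def by auto
    have "0 < mpow P (M - m i j) $ i $ i * mpow P (m i j) $ i $ j" using N[OF le(1)] m by simp
    also have "\<dots> \<le> mpow P M $ i $ j" using prod[where a="M - m i j" and b="m i j" and i=i and j=j and k=i] unfolding le(2) .
    finally show ?thesis .
  qed
  then show ?thesis by blast
qed


lemma stat_pow: "\<pi> v* P = \<pi> \<Longrightarrow> \<pi> v* mpow P m = \<pi>"
  by (induct m) (auto simp: vector_matrix_mul_assoc[symmetric])

lemma simplex_compact: "compact {x::real^'n::finite. is_distribution x}"
  unfolding compact_eq_bounded_closed
proof (rule conjI)
  show "bounded {x::real^'n::finite. is_distribution x}"
    unfolding bounded_iff
  proof (intro exI[of _ 1] ballI)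
    fix x :: "real^'n" assume "x \<in> {x. is_distribution x}"
    then have "(\<Sum>i\<in>UNIV. \<bar>x$i\<bar>) = 1" by (simp add: is_distribution_def)
    then show "norm x \<le> 1" using norm_le_l1_cart[of x] by simp
  qed
  have eq: "{x::real^'n::finite. is_distribution x} = (\<Inter>i. {x. 0 \<le> x$i}) \<inter> {x. (\<Sum>i\<in>UNIV. x$i) = 1}"
    by (auto simp: is_distribution_def)
  have c: "continuous_on UNIV (\<lambda>x::real^'n. x$i)" for i
    by (rule linear_continuous_on[OF bounded_linear_vec_nth])
  show "closed {x::real^'n::finite. is_distribution x}"
    unfolding eq
    by (intro closed_Int closed_INT ballI closed_Collect_le closed_Collect_eq continuous_on_const
        continuous_on_sum c)
qed

lemma simplex_convex: "convex {x::real^'n::finite. is_distribution x}"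
  unfolding convex_def is_distribution_def
  by (auto simp: sum.distrib sum_distrib_left[symmetric])

lemma stat_exists: assumes "stochastic (P::real^'n::finite^'n)" shows "\<exists>\<pi>. is_stationary P \<pi>"
proof -
  let ?u = "(\<chi> i. 1 / real CARD('n)) :: real^'n"
  have "is_distribution ?u" by (simp add: is_distribution_def)
  then have ne: "{x::real^'n. is_distribution x} \<noteq> {}" by auto
  have f: "(\<lambda>x. x v* P) = (*v) (transpose P)" by (simp add: fun_eq_iff)
  have cont: "continuous_on {x. is_distribution x} (\<lambda>x. x v* P)"
    unfolding f by (rule matrix_vector_mult_linear_continuous_on)
  obtain x where "x \<in> {x. is_distribution x}" "x v* P = x"
    using brouwer[OF simplex_compact simplex_convex ne cont] dist_vm[OF _ assms] by blast
  then show ?thesis by (auto simp: is_stationary_def)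
qed

lemma primitive_conv:
  assumes st: "stochastic (P::real^'n::finite^'n)" and pr: "\<forall>i j. mpow P M $ i $ j > 0"
  shows "is_stationary P (stat_dist P) \<and>
    (\<forall>e>0. \<exists>T. \<forall>\<nu>. is_distribution \<nu> \<longrightarrow> tv_dist (\<nu> v* mpow P T) (stat_dist P) \<le> e)"
proof -
  define Q where "Q = mpow P M"
  have Qs: "stochastic Q" using mpow_stoch st Q_def by simp
  define c where "c = Min (range (\<lambda>(i,j). Q$i$j))"
  have cle: "\<And>i j. c \<le> Q$i$j" unfolding c_def by (rule Min_le) auto
  have "c \<in> range (\<lambda>(i,j). Q$i$j)" unfolding c_def by (rule Min_in) auto
  then have cpos: "c > 0" using pr Q_def by auto
  define r where "r = 1 - real CARD('n) * c"
  have r1: "r < 1" using cpos by (simp add: r_def)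
  have "real CARD('n) * c = (\<Sum>j\<in>(UNIV::'n set). c)" by simp
  also have "\<dots> \<le> (\<Sum>j\<in>UNIV. Q$undefined$j)" by (intro sum_mono cle)
  also have "\<dots> = 1" by (rule stoch_sum[OF Qs])
  finally have r0: "0 \<le> r" by (simp add: r_def)
  have contr: "tv_dist (x v* Q) (y v* Q) \<le> r * tv_dist x y"
    if "is_distribution x" "is_distribution y" for x y
    using tv_contract[OF Qs cle that] r_def by simp
  obtain \<pi> where \<pi>: "is_stationary P \<pi>" using stat_exists st by blast
  have \<pi>Q: "\<pi> v* Q = \<pi>" using \<pi> stat_pow Q_def by (auto simp: is_stationary_def)
  have uniq: "\<pi>' = \<pi>" if \<pi>': "is_stationary P \<pi>'" for \<pi>'
  proof -
    have "\<pi>' v* Q = \<pi>'" using \<pi>' stat_pow Q_def by (auto simp: is_stationary_def)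
    then have "tv_dist \<pi>' \<pi> \<le> r * tv_dist \<pi>' \<pi>"
      using contr[of \<pi>' \<pi>] \<pi> \<pi>' \<pi>Q by (simp add: is_stationary_def)
    then have "(1 - r) * tv_dist \<pi>' \<pi> \<le> 0" by (simp add: algebra_simps)
    then have "tv_dist \<pi>' \<pi> = 0" using r1 tv_nonneg[of \<pi>' \<pi>]
      by (simp add: mult_le_0_iff)
    then show ?thesis by (rule tv_zero)
  qed
  have sd: "stat_dist P = \<pi>" unfolding stat_dist_def using \<pi> uniq by (rule the_equality)
  have \<pi>d: "is_distribution \<pi>" using \<pi> by (simp add: is_stationary_def)
  have pow: "tv_dist (\<nu> v* mpow P (M*j)) \<pi> \<le> r^j" if \<nu>: "is_distribution \<nu>" for \<nu> j
  proof (induct j)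
    case 0 then show ?case using tv_le1[OF \<nu> \<pi>d] by simp
  next
    case (Suc j)
    have e: "mpow P (M * Suc j) = mpow P (M*j) ** Q" unfolding Q_def
      by (metis mpow_add mult_Suc_right add.commute)
    have d: "is_distribution (\<nu> v* mpow P (M*j))" by (rule dist_vm[OF \<nu> mpow_stoch[OF st]])
    have "tv_dist (\<nu> v* mpow P (M * Suc j)) \<pi> = tv_dist ((\<nu> v* mpow P (M*j)) v* Q) (\<pi> v* Q)"
      unfolding e by (simp add: \<pi>Q vector_matrix_mul_assoc)
    also have "\<dots> \<le> r * tv_dist (\<nu> v* mpow P (M*j)) \<pi>" by (rule contr[OF d \<pi>d])
    also have "\<dots> \<le> r * r^j" using Suc r0 by (rule mult_left_mono)
    finally show ?case by simp
  qed
  show ?thesis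
  proof (intro conjI allI impI)
    show "is_stationary P (stat_dist P)" using \<pi> sd by simp
    fix e :: real assume e: "e > 0"
    obtain j where j: "r^j < e" using real_arch_pow_inv[OF e r1] by blast
    show "\<exists>T. \<forall>\<nu>. is_distribution \<nu> \<longrightarrow> tv_dist (\<nu> v* mpow P T) (stat_dist P) \<le> e"
    proof (intro exI[of _ "M*j"] allI impI)
      fix \<nu> :: "real^'n" assume "is_distribution \<nu>"
      from pow[OF this, of j] j sd show "tv_dist (\<nu> v* mpow P (M*j)) (stat_dist P) \<le> e" by simp
    qed
  qed
qed


lemma interp_nth: "interp P0 P1 s $ i $ j = (1-s) * P0$i$j + s * P1$i$j"
  by (simp add: interp_def)

lemma interp_stoch:
  assumes "stochastic P0" "stochastic P1" "0 \<le> s" "s \<le> 1"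
  shows "stochastic (interp P0 P1 s)"
proof -
  have "(\<Sum>j\<in>UNIV. interp P0 P1 s $ i $ j) = 1" for i
    using stoch_sum[OF assms(1), of i] stoch_sum[OF assms(2), of i]
    by (simp add: interp_nth sum.distrib sum_distrib_left[symmetric])
  moreover have "interp P0 P1 s $ i $ j \<ge> 0" for i j
    using stoch_nn[OF assms(1), of i j] stoch_nn[OF assms(2), of i j] assms(3,4)
    by (simp add: interp_nth)
  ultimately show ?thesis by (simp add: stochastic_def is_distribution_def)
qed

lemma mpow_lower:
  assumes A: "stochastic A" and B: "stochastic B" and t: "t \<ge> 0"
    and le: "\<And>i j. t * B$i$j \<le> A$i$j"
  shows "t^m * mpow B m $ i $ j \<le> mpow A m $ i $ j"
proof (induct m arbitrary: i j)
  case 0 then show ?case by (simp add: mat_def)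
next
  case (Suc m)
  have "t^(Suc m) * mpow B (Suc m) $ i $ j = (\<Sum>k\<in>UNIV. (t^m * mpow B m $ i $ k) * (t * B$k$j))"
    by (simp add: mm_nth sum_distrib_left algebra_simps)
  also have "\<dots> \<le> (\<Sum>k\<in>UNIV. mpow A m $ i $ k * A$k$j)"
    by (intro sum_mono mult_mono Suc le mpow_stoch[THEN stoch_nn] stoch_nn[OF A] A
        mult_nonneg_nonneg t stoch_nn[OF B])
  also have "\<dots> = mpow A (Suc m) $ i $ j" by (simp add: mm_nth)
  finally show ?case .
qed

lemma interp_primitive:
  assumes "stochastic P0" "stochastic P1" "0 < s" "s \<le> 1" "\<forall>i j. mpow P1 M $ i $ j > 0"
  shows "\<forall>i j. mpow (interp P0 P1 s) M $ i $ j > 0"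
proof (intro allI)
  fix i j
  have "s * P1$i$j \<le> interp P0 P1 s $ i $ j" for i j
    using stoch_nn[OF assms(1), of i j] assms(3,4) by (simp add: interp_nth)
  then have "s^M * mpow P1 M $ i $ j \<le> mpow (interp P0 P1 s) M $ i $ j"
    using assms by (intro mpow_lower interp_stoch) auto
  moreover have "0 < s^M * mpow P1 M $ i $ j" using assms by simp
  ultimately show "mpow (interp P0 P1 s) M $ i $ j > 0" by linarith
qed

lemma interp_row_tv:
  assumes "stochastic P0" "stochastic P1"
  shows "tv_dist (interp P0 P1 a $ i) (interp P0 P1 b $ i) \<le> \<bar>a - b\<bar>"
proof -
  have "(\<Sum>j\<in>UNIV. \<bar>interp P0 P1 a $ i $ j - interp P0 P1 b $ i $ j\<bar>)
      = (\<Sum>j\<in>UNIV. \<bar>a - b\<bar> * \<bar>P1$i$j - P0$i$j\<bar>)"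
    by (intro sum.cong refl) (simp add: interp_nth abs_mult[symmetric] algebra_simps)
  also have "\<dots> \<le> (\<Sum>j\<in>UNIV. \<bar>a - b\<bar> * (P1$i$j + P0$i$j))"
    using stoch_nn[OF assms(1)] stoch_nn[OF assms(2)]
    by (intro sum_mono mult_left_mono) (auto simp: abs_if)
  also have "\<dots> = \<bar>a - b\<bar> * 2"
    using stoch_sum[OF assms(1), of i] stoch_sum[OF assms(2), of i]
    by (simp add: sum_distrib_left[symmetric] sum.distrib)
  finally show ?thesis by (simp add: tv_dist_def interp_nth)
qed

lemma inhom_split: "inhom_prod Q (a + m) = inhom_prod Q a ** inhom_prod (\<lambda>j. Q (a + j)) m"
  by (induct m) (auto simp: matrix_mul_assoc)

lemma inhom_stoch: "(\<And>j. 1 \<le> j \<Longrightarrow> j \<le> m \<Longrightarrow> stochastic (Q j)) \<Longrightarrow> stochastic (inhom_prod Q m)"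
  by (induct m) (auto simp: stoch_id stoch_mult)

lemma tel:
  assumes x: "is_distribution x" and B: "stochastic B"
    and Q: "\<And>j. 1 \<le> j \<Longrightarrow> j \<le> m \<Longrightarrow> stochastic (Q j)"
    and e: "\<And>j i. 1 \<le> j \<Longrightarrow> j \<le> m \<Longrightarrow> tv_dist (Q j $ i) (B $ i) \<le> e"
  shows "tv_dist (x v* inhom_prod Q m) (x v* mpow B m) \<le> real m * e"
  using Q e
proof (induct m)
  case 0 then show ?case by (simp add: tv_dist_def)
next
  case (Suc m)
  define X where "X = x v* inhom_prod Q m"
  define Y where "Y = x v* mpow B m"
  have X: "is_distribution X" unfolding X_def
    using Suc.prems by (intro dist_vm[OF x] inhom_stoch) auto
  have Y: "is_distribution Y" unfolding Y_def by (intro dist_vm[OF x] mpow_stoch[OF B])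
  have IH: "tv_dist X Y \<le> real m * e" unfolding X_def Y_def
    using Suc.prems by (intro Suc.hyps) auto
  have "tv_dist (x v* inhom_prod Q (Suc m)) (x v* mpow B (Suc m)) = tv_dist (X v* Q (Suc m)) (Y v* B)"
    by (simp add: X_def Y_def vector_matrix_mul_assoc)
  also have "\<dots> \<le> tv_dist (X v* Q (Suc m)) (X v* B) + tv_dist (X v* B) (Y v* B)" by (rule tv_tri)
  also have "\<dots> \<le> e + real m * e"
    using tv_perturb[OF X, of "Q (Suc m)" B e] Suc.prems(2)[of "Suc m"] tv_nonexp[OF B, of X Y] IH
    by auto
  finally show ?case by (simp add: algebra_simps)
qed


lemma ereal_key:
  fixes U :: ereal and \<tau> \<epsilon> \<delta> :: real and T :: nat
  assumes "ereal \<tau> \<le> U" "0 \<le> \<tau>" "0 < \<epsilon>" "0 < \<delta>"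
    and h: "2 * U\<^sup>2 / ereal (\<epsilon> * \<delta>) \<le> ereal (real T)"
  shows "2 * \<tau>^2 \<le> \<epsilon> * \<delta> * real T"
proof (cases U)
  case (real u)
  have ed: "\<epsilon> * \<delta> > 0" using assms by simp
  have "2 * U\<^sup>2 / ereal (\<epsilon> * \<delta>) = ereal (2 * u^2 / (\<epsilon> * \<delta>))"
    using ed assms(3,4) by (simp add: real power2_eq_square)
  with h have "2 * u^2 / (\<epsilon> * \<delta>) \<le> real T" by simp
  then have "2 * u^2 \<le> \<epsilon> * \<delta> * real T" using ed by (simp add: divide_le_eq mult.commute)
  moreover have "\<tau> \<le> u" using assms(1) real by simp
  then have "\<tau>^2 \<le> u^2" using assms(2) by (intro power_mono) auto
  ultimately show ?thesis by linarith
next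
  case PInf
  have ed: "\<epsilon> * \<delta> > 0" using assms by simp
  have "2 * U\<^sup>2 / ereal (\<epsilon> * \<delta>) = \<infinity>" using ed by (simp add: PInf power2_eq_square)
  with h show ?thesis by simp
next
  case MInf with assms(1) show ?thesis by simp
qed


theorem theorem2:
  fixes P0 P1 :: "real^'n::finite^'n" and \<delta> \<epsilon> :: real and T k :: nat
  assumes "stochastic P0" "irreducible_chain P0" "aperiodic_chain P0"
    and "stochastic P1" "irreducible_chain P1" "aperiodic_chain P1"
    and "0 < \<delta>" "\<delta> \<le> 1" "0 < \<epsilon>"
    and "2 * (tmix_unif P0 P1 (\<epsilon> / 2))\<^sup>2 / ereal (\<epsilon> * \<delta>) \<le> ereal (real T)"
    and "\<delta> \<le> real k / real T" "real k / real T \<le> 1"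
  shows "tv_dist (stat_dist (interp P0 P1 0) v* inhom_prod (\<lambda>j. interp P0 P1 (real j / real T)) k)
                 (stat_dist (interp P0 P1 (real k / real T))) \<le> \<epsilon>"
proof -
  note st0 = assms(1) and st1 = assms(4)
  define s where "s = real k / real T"
  have T0: "T > 0" using assms(7,11) by (cases "T = 0") auto
  have s0: "0 < s" "s \<le> 1" "\<delta> \<le> s" using assms(7,11,12) s_def by auto
  have kT: "k \<le> T" using assms(12) T0 by (simp add: divide_le_eq)
  have dT: "\<delta> * real T \<le> real k" using assms(11) T0 by (simp add: le_divide_eq)
  have stP: "\<And>t. 0 \<le> t \<Longrightarrow> t \<le> 1 \<Longrightarrow> stochastic (interp P0 P1 t)"
    by (rule interp_stoch[OF st0 st1])
  obtain M1 where M1: "\<forall>i j. mpow P1 M1 $ i $ j > 0"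
    using irr_aper_primitive[OF assms(4,5,6)] by blast
  obtain M0 where M0: "\<forall>i j. mpow P0 M0 $ i $ j > 0"
    using irr_aper_primitive[OF assms(1,2,3)] by blast
  have P00: "interp P0 P1 0 = P0" by (simp add: interp_def)
  have cs: "is_stationary (interp P0 P1 s) (stat_dist (interp P0 P1 s)) \<and>
    (\<forall>e>0. \<exists>T. \<forall>\<nu>. is_distribution \<nu> \<longrightarrow>
       tv_dist (\<nu> v* mpow (interp P0 P1 s) T) (stat_dist (interp P0 P1 s)) \<le> e)"
    using s0 by (intro primitive_conv[OF stP interp_primitive[OF st0 st1 s0(1) s0(2) M1]]) auto
  have c0: "is_stationary P0 (stat_dist P0)"
    using primitive_conv[OF st0 M0] by blast
  define \<pi>0 where "\<pi>0 = stat_dist (interp P0 P1 0)"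
  have \<pi>0: "is_distribution \<pi>0" using c0 P00 by (simp add: \<pi>0_def is_stationary_def)
  define \<pi>s where "\<pi>s = stat_dist (interp P0 P1 s)"
  have \<pi>s: "is_distribution \<pi>s" using cs by (simp add: \<pi>s_def is_stationary_def)
  define \<tau> where "\<tau> = tmix (interp P0 P1 s) (\<epsilon>/2)"
  have ex: "\<exists>T. \<forall>\<nu>. is_distribution \<nu> \<longrightarrow>
       tv_dist (\<nu> v* mpow (interp P0 P1 s) T) (stat_dist (interp P0 P1 s)) \<le> \<epsilon>/2"
    using cs assms(9) half_gt_zero by blast
  have mix: "\<forall>\<nu>. is_distribution \<nu> \<longrightarrow> tv_dist (\<nu> v* mpow (interp P0 P1 s) \<tau>) \<pi>s \<le> \<epsilon>/2"
    unfolding \<tau>_def tmix_def \<pi>s_def by (rule LeastI_ex[OF ex])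
  have "ereal (real \<tau>) \<le> tmix_unif P0 P1 (\<epsilon> / 2)"
    unfolding tmix_unif_def \<tau>_def using s0 by (intro SUP_upper) auto
  from ereal_key[OF this _ assms(9) assms(7) assms(10)]
  have key: "2 * real \<tau>^2 \<le> \<epsilon> * \<delta> * real T" by simp
  define Q where "Q = (\<lambda>j. interp P0 P1 (real j / real T))"
  have Qst: "stochastic (Q j)" if "j \<le> k" for j
    unfolding Q_def using that kT T0 by (intro stP) (auto simp: divide_le_eq)
  have LHS: "is_distribution (\<pi>0 v* inhom_prod Q k)"
    by (intro dist_vm[OF \<pi>0] inhom_stoch Qst)
  show ?thesis
  proof (cases "\<tau> \<le> k")
    case False
    then have "real k < real \<tau>" by simp
    have "\<epsilon> * \<delta> * real T \<le> \<epsilon> * real k"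
      using mult_left_mono[OF dT, of \<epsilon>] assms(9) by (simp add: mult.assoc)
    then have "2 * real \<tau>^2 \<le> \<epsilon> * real k" using key by linarith
    also have "\<dots> < \<epsilon> * real \<tau>" using \<open>real k < real \<tau>\<close> assms(9) by simp
    finally have "2 * real \<tau> * real \<tau> < \<epsilon> * real \<tau>" by (simp add: power2_eq_square)
    then have "2 < \<epsilon>" using \<open>real k < real \<tau>\<close> by (simp add: mult_less_cancel_right)
    then show ?thesis using tv_le1[OF LHS \<pi>s] by (simp add: Q_def \<pi>0_def \<pi>s_def s_def)
  next
    case True
    define a where "a = k - \<tau>"
    have ka: "k = a + \<tau>" using True a_def by simp
    define x where "x = \<pi>0 v* inhom_prod Q a"
    have x: "is_distribution x" unfolding x_def using ka
      by (intro dist_vm[OF \<pi>0] inhom_stoch Qst) auto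
    have eqv: "\<pi>0 v* inhom_prod Q k = x v* inhom_prod (\<lambda>j. Q (a + j)) \<tau>"
      unfolding x_def ka inhom_split by (simp add: vector_matrix_mul_assoc)
    have stPs: "stochastic (interp P0 P1 s)" using s0 by (intro stP) auto
    have "tv_dist (x v* inhom_prod (\<lambda>j. Q (a + j)) \<tau>) (x v* mpow (interp P0 P1 s) \<tau>)
        \<le> real \<tau> * (real \<tau> / real T)"
    proof (rule tel[OF x stPs])
      fix j assume j: "1 \<le> j" "j \<le> \<tau>"
      then show "stochastic (Q (a + j))" using ka by (intro Qst) auto
      fix i
      have "tv_dist (Q (a + j) $ i) (interp P0 P1 s $ i) \<le> \<bar>real (a + j) / real T - s\<bar>"
        unfolding Q_def by (rule interp_row_tv[OF st0 st1])
      also have "\<dots> = (real k - real (a + j)) / real T"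
      proof -
        have nn: "0 \<le> (real k - real (a+j)) / real T" using j ka by simp
        have "real (a + j) / real T - s = - ((real k - real (a + j)) / real T)"
          by (simp add: s_def diff_divide_distrib)
        then show ?thesis using nn by (simp only: abs_minus_cancel abs_of_nonneg)
      qed
      also have "\<dots> \<le> real \<tau> / real T"
        using j ka T0 by (intro divide_right_mono) auto
      finally show "tv_dist (Q (a + j) $ i) (interp P0 P1 s $ i) \<le> real \<tau> / real T" .
    qed
    moreover have "tv_dist (x v* mpow (interp P0 P1 s) \<tau>) \<pi>s \<le> \<epsilon>/2" using mix x by blast
    moreover have "real \<tau> * (real \<tau> / real T) \<le> \<epsilon>/2"
    proof -
      have "\<epsilon> * \<delta> * real T \<le> \<epsilon> * 1 * real T" using assms(8,9)
        by (intro mult_right_mono mult_left_mono) auto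
      then have "2 * real \<tau>^2 \<le> \<epsilon> * real T" using key by linarith
      then have "real \<tau>^2 \<le> \<epsilon>/2 * real T" by simp
      then have "real \<tau>^2 / real T \<le> \<epsilon>/2" using T0 by (simp add: pos_divide_le_eq)
      then show ?thesis by (simp add: power2_eq_square)
    qed
    ultimately have "tv_dist (\<pi>0 v* inhom_prod Q k) \<pi>s \<le> \<epsilon>"
      unfolding eqv using tv_tri[of "x v* inhom_prod (\<lambda>j. Q (a + j)) \<tau>" \<pi>s "x v* mpow (interp P0 P1 s) \<tau>"]
      by linarith
    then show ?thesis by (simp add: Q_def \<pi>0_def \<pi>s_def s_def)
  qed
qed

end
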